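(* Let $L\subseteq\mathbb{C}^n$ be a linear subspace and $m\ge1$. Let $S,T\subseteq[m]\times[n]$ be such that for every $j\in[n]$ the $j$th columns have the same size, $|S_{*,j}|=|T_{*,j}|$. Then \[ \prod_{i=1}^m z_{S_{i,*}}-\prod_{i=1}^m z_{T_{i,*}}\in I_L^{\mathrm{SE}}. \]
   Context: For $S\subseteq[m]\times[n]$, viewed as an $m\times n$ $0/1$ matrix, $S_{i,*}=\{j\in[n]:(i,j)\in S\}$ (the $i$th row) and $S_{*,j}=\{i\in[m]:(i,j)\in S\}$ (the $j$th column). Let $M$ be the matroid of $L$ (bases: $d$-sets $B$ with $L\to\mathbb{C}^B$ an isomorphism, $d=\dim L$). Fix a matrix with row space $L$ and columns $A_i$; for each circuit $C$ of $M$ fix the linear dependence $\sum_{i\in C}\alpha_{C,i}A_i=0$. For $A'\subseteq[n]\setminus C$ set $f_C^{A'}(z)=\sum_{i\in C}\alpha_{C,i}z_{A'\cup\{i\}}$. $I_L^{\mathrm{SE}}\subseteq\mathbb{C}[z_S:S\subseteq[n]]$ is the ideal generated by all $z_Sz_T-z_{S\cup T}z_{S\cap T}$ ($S,T\subseteq[n]$) and all $f_C^{A'}(z)$. *)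

theory Defs
  imports Complex_Main "HOL-Library.Poly_Mapping"
begin

text \<open>Polynomials over the complex numbers in variables z_S indexed by sets S of naturals:
  a polynomial maps monomials (finitely supported exponent vectors) to coefficients.\<close>
type_synonym cpoly = "(nat set \<Rightarrow>\<^sub>0 nat) \<Rightarrow>\<^sub>0 complex"

definition zvar :: "nat set \<Rightarrow> cpoly" where
  "zvar S = Poly_Mapping.single (Poly_Mapping.single S 1) 1"

definition cconst :: "complex \<Rightarrow> cpoly" where
  "cconst c = Poly_Mapping.single 0 c"

definition in_zring :: "nat \<Rightarrow> cpoly \<Rightarrow> bool" where
  "in_zring n p \<longleftrightarrow> (\<forall>mon\<in>Poly_Mapping.keys p. Poly_Mapping.keys mon \<subseteq> Pow {1..n})"

inductive_set ideal_gen :: "nat \<Rightarrow> cpoly set \<Rightarrow> cpoly set" for n G where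
  gen: "g \<in> G \<Longrightarrow> g \<in> ideal_gen n G"
| zero: "0 \<in> ideal_gen n G"
| add: "p \<in> ideal_gen n G \<Longrightarrow> q \<in> ideal_gen n G \<Longrightarrow> p + q \<in> ideal_gen n G"
| mult: "in_zring n h \<Longrightarrow> p \<in> ideal_gen n G \<Longrightarrow> h * p \<in> ideal_gen n G"

text \<open>Matroid of L subset of C^n (vectors are functions nat => complex, coordinates in [n]):
  B is a basis iff the coordinate projection L -> C^B is an isomorphism.\<close>
definition restr :: "nat set \<Rightarrow> (nat \<Rightarrow> complex) \<Rightarrow> (nat \<Rightarrow> complex)" where
  "restr B v = (\<lambda>i. if i \<in> B then v i else 0)"

definition mat_basis :: "nat \<Rightarrow> (nat \<Rightarrow> complex) set \<Rightarrow> nat set \<Rightarrow> bool" where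
  "mat_basis n L B \<longleftrightarrow> B \<subseteq> {1..n} \<and>
     bij_betw (restr B) L {w. \<forall>i. i \<notin> B \<longrightarrow> w i = 0}"

definition mat_indep :: "nat \<Rightarrow> (nat \<Rightarrow> complex) set \<Rightarrow> nat set \<Rightarrow> bool" where
  "mat_indep n L I \<longleftrightarrow> (\<exists>B. mat_basis n L B \<and> I \<subseteq> B)"

definition mat_circuit :: "nat \<Rightarrow> (nat \<Rightarrow> complex) set \<Rightarrow> nat set \<Rightarrow> bool" where
  "mat_circuit n L C \<longleftrightarrow> C \<subseteq> {1..n} \<and> \<not> mat_indep n L C \<and>
     (\<forall>D. D \<subset> C \<longrightarrow> mat_indep n L D)"

definition row_space :: "nat \<Rightarrow> (nat \<Rightarrow> nat \<Rightarrow> complex) \<Rightarrow> (nat \<Rightarrow> complex) set" where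
  "row_space r A = {(\<lambda>i. \<Sum>k<r. c k * A k i) | c. True}"

definition col_dep :: "nat \<Rightarrow> (nat \<Rightarrow> nat \<Rightarrow> complex) \<Rightarrow> nat set \<Rightarrow> (nat \<Rightarrow> complex) \<Rightarrow> bool" where
  "col_dep r A C \<alpha> \<longleftrightarrow> (\<forall>k<r. (\<Sum>i\<in>C. \<alpha> i * A k i) = 0)"

definition fC :: "nat set \<Rightarrow> (nat \<Rightarrow> complex) \<Rightarrow> nat set \<Rightarrow> cpoly" where
  "fC C \<alpha> A' = (\<Sum>i\<in>C. cconst (\<alpha> i) * zvar (insert i A'))"

definition ISE_gens :: "nat \<Rightarrow> (nat \<Rightarrow> complex) set \<Rightarrow> nat \<Rightarrow> (nat \<Rightarrow> nat \<Rightarrow> complex) \<Rightarrow> cpoly set" where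
  "ISE_gens n L r A =
     {zvar S * zvar T - zvar (S \<union> T) * zvar (S \<inter> T) | S T. S \<subseteq> {1..n} \<and> T \<subseteq> {1..n}}
   \<union> {fC C \<alpha> A' | C \<alpha> A'. mat_circuit n L C \<and> col_dep r A C \<alpha> \<and> (\<forall>i\<in>C. \<alpha> i \<noteq> 0)
                        \<and> A' \<subseteq> {1..n} - C}"

definition ISE :: "nat \<Rightarrow> (nat \<Rightarrow> complex) set \<Rightarrow> nat \<Rightarrow> (nat \<Rightarrow> nat \<Rightarrow> complex) \<Rightarrow> cpoly set" where
  "ISE n L r A = ideal_gen n (ISE_gens n L r A)"

definition row_of :: "(nat \<times> nat) set \<Rightarrow> nat \<Rightarrow> nat set" where
  "row_of S i = {j. (i, j) \<in> S}"

definition col_of :: "(nat \<times> nat) set \<Rightarrow> nat \<Rightarrow> nat set" where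
  "col_of S j = {i. (i, j) \<in> S}"

end

theory Submission
  imports Defs
begin

lemma in_zring_mult:
  assumes "in_zring n p" "in_zring n q" shows "in_zring n (p * q)"
  unfolding in_zring_def
proof
  fix mon assume m: "mon \<in> Poly_Mapping.keys (p * q)"
  have "mon \<in> {a + b | a b. a \<in> Poly_Mapping.keys p \<and> b \<in> Poly_Mapping.keys q}"
    using subsetD[OF keys_mult m] .
  then obtain a b where ab: "mon = a + b" "a \<in> Poly_Mapping.keys p" "b \<in> Poly_Mapping.keys q"
    by (auto simp only: mem_Collect_eq)
  have "Poly_Mapping.keys mon \<subseteq> Poly_Mapping.keys a \<union> Poly_Mapping.keys b"
    unfolding ab(1) by (rule keys_add)
  moreover have "Poly_Mapping.keys a \<subseteq> Pow {1..n}" using assms(1) ab(2) unfolding in_zring_def by (rule bspec)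
  moreover have "Poly_Mapping.keys b \<subseteq> Pow {1..n}" using assms(2) ab(3) unfolding in_zring_def by (rule bspec)
  ultimately show "Poly_Mapping.keys mon \<subseteq> Pow {1..n}" by (rule subset_trans[OF _ Un_least])
qed

lemma in_zring_zvar: "X \<subseteq> {1..n} \<Longrightarrow> in_zring n (zvar X)"
  unfolding in_zring_def zvar_def by simp

lemma in_zring_neg1: "in_zring n (-1)"
  unfolding in_zring_def by simp

lemma in_zring_one: "in_zring n 1"
  unfolding in_zring_def by simp

lemma in_zring_prod: "(\<And>i. i \<in> I \<Longrightarrow> F i \<subseteq> {1..n}) \<Longrightarrow> in_zring n (\<Prod>i\<in>I. zvar (F i))"
  by (induction I rule: infinite_finite_induct)
     (auto simp: in_zring_one in_zring_mult in_zring_zvar)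

lemma tele: "(a - b) + (b - c) = a - (c::'a::ab_group_add)" by simp

locale cgctx =
  fixes n :: nat and G :: "cpoly set"
  assumes exch: "\<And>X Y. X \<subseteq> {1..n} \<Longrightarrow> Y \<subseteq> {1..n} \<Longrightarrow>
      zvar X * zvar Y - zvar (X \<union> Y) * zvar (X \<inter> Y) \<in> G"
begin

definition cg :: "cpoly \<Rightarrow> cpoly \<Rightarrow> bool" where
  "cg p q \<longleftrightarrow> p - q \<in> ideal_gen n G"

lemma cg_refl: "cg p p"
  unfolding cg_def by (simp add: ideal_gen.zero)

lemma cg_sym: "cg p q \<Longrightarrow> cg q p"
  unfolding cg_def using ideal_gen.mult[where h="-1" and p="p - q", OF in_zring_neg1] by simp

lemma cg_trans: "cg p q \<Longrightarrow> cg q s \<Longrightarrow> cg p s"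
  unfolding cg_def using ideal_gen.add[of "p - q" n G "q - s"] by simp

lemma cg_multl: "in_zring n h \<Longrightarrow> cg p q \<Longrightarrow> cg (h * p) (h * q)"
  unfolding cg_def using ideal_gen.mult[of n h "p - q" G] by (simp add: right_diff_distrib)

lemma cg_multr: "in_zring n h \<Longrightarrow> cg p q \<Longrightarrow> cg (p * h) (q * h)"
  using cg_multl by (simp add: mult.commute)

lemma cg_exch: "X \<subseteq> {1..n} \<Longrightarrow> Y \<subseteq> {1..n} \<Longrightarrow>
   cg (zvar X * zvar Y) (zvar (X \<union> Y) * zvar (X \<inter> Y))"
  unfolding cg_def using exch ideal_gen.gen by blast

definition ch :: "(nat \<Rightarrow> nat) \<Rightarrow> nat \<Rightarrow> nat set" where
  "ch f k = {j \<in> {1..n}. k \<le> f j}"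

lemma ch_sub: "ch f k \<subseteq> {1..n}" unfolding ch_def by auto

lemma insertion:
  fixes f :: "nat \<Rightarrow> nat"
  assumes X: "X \<subseteq> {1..n}"
  defines "g \<equiv> (\<lambda>j. f j + (if j \<in> X then 1 else 0))"
  shows "cg (zvar X * (\<Prod>i\<in>{1..l}. zvar (ch f i)))
            ((\<Prod>i\<in>{1..l}. zvar (ch g i)) * zvar (X \<inter> ch f l))"
proof (induction l)
  case 0
  have "X \<inter> ch f 0 = X" using X unfolding ch_def by auto
  then show ?case by (simp add: cg_refl)
next
  case (Suc l)
  let ?P = "\<Prod>i\<in>{1..l}. zvar (ch f i)"
  let ?Q = "\<Prod>i\<in>{1..l}. zvar (ch g i)"
  have "cg (zvar X * ?P * zvar (ch f (Suc l))) (?Q * zvar (X \<inter> ch f l) * zvar (ch f (Suc l)))"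
    using cg_multr[OF in_zring_zvar[OF ch_sub] Suc.IH] by simp
  moreover have "cg (?Q * (zvar (X \<inter> ch f l) * zvar (ch f (Suc l))))
        (?Q * (zvar ((X \<inter> ch f l) \<union> ch f (Suc l)) * zvar ((X \<inter> ch f l) \<inter> ch f (Suc l))))"
    by (rule cg_multl[OF in_zring_prod[OF ch_sub] cg_exch]) (use X ch_sub in auto)
  moreover have "(X \<inter> ch f l) \<union> ch f (Suc l) = ch g (Suc l)"
    unfolding ch_def g_def by auto
  moreover have "(X \<inter> ch f l) \<inter> ch f (Suc l) = X \<inter> ch f (Suc l)"
    unfolding ch_def by auto
  ultimately have "cg (zvar X * ?P * zvar (ch f (Suc l))) (?Q * zvar (ch g (Suc l)) * zvar (X \<inter> ch f (Suc l)))"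
    using cg_trans by (simp add: mult.assoc)
  then show ?case by (simp add: mult.assoc)
qed

definition cnt :: "(nat \<times> nat) set \<Rightarrow> nat \<Rightarrow> nat" where
  "cnt S j = card (col_of S j)"

lemma main:
  "S \<subseteq> {1..m} \<times> {1..n} \<Longrightarrow>
   cg (\<Prod>i\<in>{1..m}. zvar (row_of S i)) (\<Prod>i\<in>{1..m}. zvar (ch (cnt S) i))"
proof (induction m arbitrary: S)
  case 0
  then show ?case by (simp add: cg_refl)
next
  case (Suc m)
  define S' where "S' = S \<inter> ({1..m} \<times> UNIV)"
  define X where "X = row_of S (Suc m)"
  define f where "f = cnt S'"
  define g where "g = (\<lambda>j. f j + (if j \<in> X then 1 else 0))"
  have S': "S' \<subseteq> {1..m} \<times> {1..n}" using Suc.prems unfolding S'_def by auto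
  have X: "X \<subseteq> {1..n}" using Suc.prems unfolding X_def row_of_def by auto
  have rows: "(\<Prod>i\<in>{1..m}. zvar (row_of S i)) = (\<Prod>i\<in>{1..m}. zvar (row_of S' i))"
    by (rule prod.cong) (auto simp: row_of_def S'_def)
  have rowsub: "\<And>i. row_of S' i \<subseteq> {1..n}" using S' unfolding row_of_def by auto
  have colS': "col_of S' j \<subseteq> {1..m}" for j using S' unfolding col_of_def by auto
  have fle: "f j \<le> m" for j unfolding f_def cnt_def
    using card_mono[OF _ colS'[of j]] by simp
  have Sb: "\<And>x j. (x, j) \<in> S \<Longrightarrow> 1 \<le> x \<and> x \<le> Suc m \<and> j \<in> {1..n}"
    using Suc.prems by auto
  have colS: "col_of S j = col_of S' j \<union> (if j \<in> X then {Suc m} else {})" for j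
    using Sb unfolding col_of_def S'_def X_def row_of_def by (auto simp: le_Suc_eq)
  have cntS: "cnt S j = g j" for j
  proof -
    have "Suc m \<notin> col_of S' j" using colS' by force
    moreover have "finite (col_of S' j)" using colS' finite_subset by blast
    ultimately show ?thesis unfolding cnt_def g_def f_def using colS[of j] by (auto simp: cnt_def)
  qed
  have chS: "ch (cnt S) = ch g" using cntS by (intro ext) (simp add: ch_def)
  have step1: "cg (zvar X * (\<Prod>i\<in>{1..m}. zvar (row_of S' i))) (zvar X * (\<Prod>i\<in>{1..m}. zvar (ch f i)))"
    using cg_multl[OF in_zring_zvar[OF X] Suc.IH[OF S']] f_def by simp
  have step2: "cg (zvar X * (\<Prod>i\<in>{1..m}. zvar (ch f i)))
            ((\<Prod>i\<in>{1..m}. zvar (ch g i)) * zvar (X \<inter> ch f m))"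
    using insertion[OF X, of f m] g_def by simp
  have last: "X \<inter> ch f m = ch g (Suc m)"
    proof -
    have "j \<in> X \<and> m \<le> f j \<longleftrightarrow> Suc m \<le> g j" for j
      using fle[of j] unfolding g_def by auto
    then show ?thesis using X unfolding ch_def by auto
  qed
  have "cg ((\<Prod>i\<in>{1..m}. zvar (row_of S i)) * zvar X) ((\<Prod>i\<in>{1..m}. zvar (ch g i)) * zvar (ch g (Suc m)))"
    using cg_trans[OF step1 step2[unfolded last]] rows by (simp add: mult.commute)
  then show ?case using chS X_def by simp
qed

end

theorem lemma5p16:
  fixes n m r :: nat and L :: "(nat \<Rightarrow> complex) set"
    and A :: "nat \<Rightarrow> nat \<Rightarrow> complex" and S T :: "(nat \<times> nat) set"
  assumes "m \<ge> 1"
    and "\<forall>k<r. \<forall>i. i \<notin> {1..n} \<longrightarrow> A k i = 0"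
    and "row_space r A = L"
    and "S \<subseteq> {1..m} \<times> {1..n}" and "T \<subseteq> {1..m} \<times> {1..n}"
    and "\<forall>j\<in>{1..n}. card (col_of S j) = card (col_of T j)"
  shows "(\<Prod>i\<in>{1..m}. zvar (row_of S i)) - (\<Prod>i\<in>{1..m}. zvar (row_of T i)) \<in> ISE n L r A"
proof -
  interpret c: cgctx n "ISE_gens n L r A"
  proof
    fix X Y assume "X \<subseteq> {1..n}" "Y \<subseteq> {1..n}"
    then show "zvar X * zvar Y - zvar (X \<union> Y) * zvar (X \<inter> Y) \<in> ISE_gens n L r A"
      unfolding ISE_gens_def by (intro UnI1) blast
  qed
  have e: "c.ch (c.cnt S) = c.ch (c.cnt T)"
  proof -
    have "\<And>j. j \<in> {1..n} \<Longrightarrow> c.cnt S j = c.cnt T j" using assms(6) unfolding c.cnt_def by blast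
    then show ?thesis unfolding c.ch_def by (intro ext Collect_cong) auto
  qed
  have m1: "c.cg (\<Prod>i\<in>{1..m}. zvar (row_of S i)) (\<Prod>i\<in>{1..m}. zvar (c.ch (c.cnt S) i))"
    by (rule c.main[OF assms(4)])
  have m2: "c.cg (\<Prod>i\<in>{1..m}. zvar (c.ch (c.cnt T) i)) (\<Prod>i\<in>{1..m}. zvar (row_of T i))"
    by (rule c.cg_sym[OF c.main[OF assms(5)]])
  have m3: "c.cg (\<Prod>i\<in>{1..m}. zvar (c.ch (c.cnt S) i)) (\<Prod>i\<in>{1..m}. zvar (row_of T i))"
    unfolding e by (rule m2)
  have i1: "(\<Prod>i\<in>{1..m}. zvar (row_of S i)) - (\<Prod>i\<in>{1..m}. zvar (c.ch (c.cnt S) i)) \<in> ideal_gen n (ISE_gens n L r A)"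
    using m1 unfolding c.cg_def .
  have i3: "(\<Prod>i\<in>{1..m}. zvar (c.ch (c.cnt S) i)) - (\<Prod>i\<in>{1..m}. zvar (row_of T i)) \<in> ideal_gen n (ISE_gens n L r A)"
    using m3 unfolding c.cg_def .
  have "((\<Prod>i\<in>{1..m}. zvar (row_of S i)) - (\<Prod>i\<in>{1..m}. zvar (c.ch (c.cnt S) i))) + ((\<Prod>i\<in>{1..m}. zvar (c.ch (c.cnt S) i)) - (\<Prod>i\<in>{1..m}. zvar (row_of T i))) \<in> ideal_gen n (ISE_gens n L r A)"
    by (rule ideal_gen.add[OF i1 i3])
  then show ?thesis unfolding ISE_def by (simp only: tele)
qed

end
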